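(* Let $\mathcal C\subseteq(S^2)^n$ be a vector trifferent code equipped with a fixed total order $<$. For $x,y,a,b\in\mathcal C$ with $x<y$ and $a<b$, \[ P_{x,y}(E_{a,b})=\begin{cases}\{0\}, & (a,b)\ne(x,y),\\ E_{a,b}, & (a,b)=(x,y).\end{cases} \] Consequently the sum $\sum_{x<y} E_{x,y}$ of subspaces of $(\mathbb R^3)^{\otimes n}$, over all pairs $x<y$ in $\mathcal C$, is a direct sum.
   Context: A vector trifferent code of block length $n$ is a subset $\mathcal C\subseteq(S^2)^n$ ($S^2$ the unit sphere in $\mathbb R^3$) such that for any three distinct $x,y,z\in\mathcal C$ there is $i\in[n]$ with $x_i,y_i,z_i$ mutually orthogonal. For nonzero $u,v\in\mathbb R^3$ define the subspace $f(u,v)=u^\perp\cap v^\perp$ if $u\perp v$, and $f(u,v)=u^\perp$ otherwise, where $u^\perp$ is the orthogonal complement of $u$ in $\mathbb R^3$. For $x,y\in\mathcal C$ define $E_{x,y}=\bigotimes_{i=1}^n f(x_i,y_i)\subseteq(\mathbb R^3)^{\otimes n}$ and $P_{x,y}=\bigotimes_{i=1}^n P_{f(x_i,y_i)}$, where $P_S$ denotes the orthogonal projection of $\mathbb R^3$ onto the subspace $S$. *)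

theory Defs
  imports "HOL-Analysis.Analysis"
begin

definition vector_trifferent :: "nat \<Rightarrow> (real^3) list set \<Rightarrow> bool" where
  "vector_trifferent n C \<longleftrightarrow>
     (\<forall>x\<in>C. length x = n \<and> (\<forall>i<n. norm (x ! i) = 1)) \<and>
     (\<forall>x\<in>C. \<forall>y\<in>C. \<forall>z\<in>C. x \<noteq> y \<and> y \<noteq> z \<and> x \<noteq> z \<longrightarrow>
        (\<exists>i<n. orthogonal (x ! i) (y ! i) \<and> orthogonal (y ! i) (z ! i)
               \<and> orthogonal (x ! i) (z ! i)))"

definition fsub :: "real^3 \<Rightarrow> real^3 \<Rightarrow> (real^3) set" where
  "fsub u v = (if orthogonal u v then orthogonal_comp {u} \<inter> orthogonal_comp {v}
               else orthogonal_comp {u})"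

definition proj :: "(real^3) set \<Rightarrow> real^3 \<Rightarrow> real^3" where
  "proj S v = (THE p. p \<in> S \<and> (\<forall>s\<in>S. orthogonal (v - p) s))"

text \<open>The n-fold tensor power of R^3 is modelled as real functions on index
  lists of length n (with value 0 on lists of other length); the basis of R^3 is
  indexed by the type 3.\<close>
definition tensor_space :: "nat \<Rightarrow> (3 list \<Rightarrow> real) set" where
  "tensor_space n = {t. \<forall>js. length js \<noteq> n \<longrightarrow> t js = 0}"

definition ptensor :: "nat \<Rightarrow> (nat \<Rightarrow> real^3) \<Rightarrow> 3 list \<Rightarrow> real" where
  "ptensor n v js = (if length js = n then (\<Prod>i<n. v i $ (js ! i)) else 0)"

definition tensor_subspace :: "nat \<Rightarrow> (nat \<Rightarrow> (real^3) set) \<Rightarrow> (3 list \<Rightarrow> real) set" where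
  "tensor_subspace n S = {t. \<exists>m (c :: nat \<Rightarrow> real) (v :: nat \<Rightarrow> nat \<Rightarrow> real^3).
      (\<forall>k<m. \<forall>i<n. v k i \<in> S i) \<and> t = (\<lambda>js. \<Sum>k<m. c k * ptensor n (v k) js)}"

definition tensor_map :: "nat \<Rightarrow> (nat \<Rightarrow> real^3 \<Rightarrow> real^3) \<Rightarrow> (3 list \<Rightarrow> real) \<Rightarrow> 3 list \<Rightarrow> real" where
  "tensor_map n A t js = (if length js = n then
      (\<Sum>ks\<in>{ks. length ks = n}. (\<Prod>i<n. matrix (A i) $ (js ! i) $ (ks ! i)) * t ks)
    else 0)"

definition Esub :: "nat \<Rightarrow> (real^3) list \<Rightarrow> (real^3) list \<Rightarrow> (3 list \<Rightarrow> real) set" where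
  "Esub n x y = tensor_subspace n (\<lambda>i. fsub (x ! i) (y ! i))"

definition Pmap :: "nat \<Rightarrow> (real^3) list \<Rightarrow> (real^3) list \<Rightarrow> (3 list \<Rightarrow> real) \<Rightarrow> 3 list \<Rightarrow> real" where
  "Pmap n x y = tensor_map n (\<lambda>i. proj (fsub (x ! i) (y ! i)))"

end

theory Submission imports Defs begin

lemma finite_len: "finite {ks::'a::finite list. length ks = n}"
  using finite_lists_length_eq[of "UNIV::'a set" n] by simp

lemma sum_prod_lists:
  fixes g :: "nat \<Rightarrow> 'a::finite \<Rightarrow> real"
  shows "(\<Sum>ks\<in>{ks::'a list. length ks = n}. \<Prod>i<n. g i (ks!i)) = (\<Prod>i<n. \<Sum>k\<in>UNIV. g i k)"
proof (induction n arbitrary: g)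
  case 0
  then show ?case by simp
next
  case (Suc n)
  have eq: "{ks::'a list. length ks = Suc n} = (\<lambda>(k,ks). k#ks) ` (UNIV \<times> {ks. length ks = n})"
    by (auto simp: length_Suc_conv image_iff)
  have inj: "inj_on (\<lambda>(k,ks). k#ks) (UNIV \<times> {ks::'a list. length ks = n})"
    by (auto simp: inj_on_def)
  have "(\<Sum>ks\<in>{ks::'a list. length ks = Suc n}. \<Prod>i<Suc n. g i (ks!i))
      = (\<Sum>(k,ks)\<in>UNIV \<times> {ks::'a list. length ks = n}. g 0 k * (\<Prod>i<n. g (Suc i) (ks!i)))"
    unfolding eq by (subst sum.reindex[OF inj]) (simp add: prod.lessThan_Suc_shift case_prod_beta del: prod.lessThan_Suc)
  also have "\<dots> = (\<Sum>k\<in>UNIV. \<Sum>ks\<in>{ks::'a list. length ks = n}. g 0 k * (\<Prod>i<n. g (Suc i) (ks!i)))"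
    by (rule sum.cartesian_product[symmetric])
  also have "\<dots> = (\<Sum>k\<in>UNIV. g 0 k) * (\<Sum>ks\<in>{ks::'a list. length ks = n}. (\<Prod>i<n. g (Suc i) (ks!i)))"
    by (rule sum_product[symmetric])
  also have "\<dots> = (\<Sum>k\<in>UNIV. g 0 k) * (\<Prod>i<n. \<Sum>k\<in>UNIV. g (Suc i) k)"
    using Suc[of "\<lambda>i. g (Suc i)"] by simp
  also have "\<dots> = (\<Prod>i<Suc n. \<Sum>k\<in>UNIV. g i k)"
    by (simp add: prod.lessThan_Suc_shift del: prod.lessThan_Suc)
  finally show ?case .
qed

lemma tensor_map_lin:
  assumes "finite K"
  shows "tensor_map n A (\<lambda>js. \<Sum>k\<in>K. c k * f k js) = (\<lambda>js. \<Sum>k\<in>K. c k * tensor_map n A (f k) js)"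
proof
  fix js :: "3 list"
  show "tensor_map n A (\<lambda>js. \<Sum>k\<in>K. c k * f k js) js = (\<Sum>k\<in>K. c k * tensor_map n A (f k) js)"
    unfolding tensor_map_def
    by (simp add: sum_distrib_left sum_distrib_right mult_ac sum.swap[where A=K])
qed

lemma tensor_map_ptensor:
  assumes "\<forall>i<n. linear (A i)"
  shows "tensor_map n A (ptensor n v) = ptensor n (\<lambda>i. A i (v i))"
proof
  fix js :: "3 list"
  show "tensor_map n A (ptensor n v) js = ptensor n (\<lambda>i. A i (v i)) js"
  proof (cases "length js = n")
    case True
    have "tensor_map n A (ptensor n v) js =
       (\<Sum>ks\<in>{ks::3 list. length ks = n}. \<Prod>i<n. matrix (A i) $ (js ! i) $ (ks ! i) * v i $ (ks!i))"
      unfolding tensor_map_def ptensor_def using True by (simp add: prod.distrib)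
    also have "\<dots> = (\<Prod>i<n. \<Sum>k\<in>UNIV. matrix (A i) $ (js ! i) $ k * v i $ k)"
      by (rule sum_prod_lists)
    also have "\<dots> = (\<Prod>i<n. (matrix (A i) *v v i) $ (js!i))"
      by (simp add: matrix_vector_mult_def)
    also have "\<dots> = (\<Prod>i<n. A i (v i) $ (js!i))"
      apply (rule prod.cong, simp)
      using assms by (metis lessThan_iff matrix_vector_mul(2))
    finally show ?thesis using True by (simp add: ptensor_def)
  qed (simp add: tensor_map_def ptensor_def)
qed

lemma proj_unique:
  fixes S :: "(real^3) set"
  assumes "subspace S" "p \<in> S" "\<forall>s\<in>S. orthogonal (v - p) s"
  shows "proj S v = p"
  unfolding proj_def
proof (rule the_equality)
  show "p \<in> S \<and> (\<forall>s\<in>S. orthogonal (v - p) s)" using assms by simp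
next
  fix q assume q: "q \<in> S \<and> (\<forall>s\<in>S. orthogonal (v - q) s)"
  have d: "p - q \<in> S" using assms q by (simp add: subspace_diff)
  have "orthogonal (v - p) (p - q)" "orthogonal (v - q) (p - q)" using assms q d by auto
  then have "(p - q) \<bullet> (p - q) = 0"
    by (simp add: orthogonal_def inner_diff_left inner_diff_right inner_commute)
  then show "q = p" by simp
qed

lemma proj_exists:
  fixes S :: "(real^3) set"
  assumes "subspace S"
  shows "\<exists>p. p \<in> S \<and> (\<forall>s\<in>S. orthogonal (v - p) s)"
proof -
  obtain y z where "y \<in> span S" "\<And>w. w \<in> span S \<Longrightarrow> orthogonal z w" "v = y + z"
    using orthogonal_subspace_decomp_exists[of S v] by metis
  moreover have "span S = S" using assms by (simp add: span_eq_iff)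
  ultimately show ?thesis by (intro exI[of _ y]) (auto simp: orthogonal_commute)
qed

lemma proj_prop:
  fixes S :: "(real^3) set"
  assumes "subspace S"
  shows "proj S v \<in> S \<and> (\<forall>s\<in>S. orthogonal (v - proj S v) s)"
  using proj_exists[OF assms, of v] proj_unique[OF assms] by metis

lemma proj_linear:
  fixes S :: "(real^3) set"
  assumes "subspace S"
  shows "linear (proj S)"
proof (rule linearI)
  fix a b
  show "proj S (a + b) = proj S a + proj S b"
    using proj_prop[OF assms, of a] proj_prop[OF assms, of b]
    by (intro proj_unique[OF assms]) (auto simp: subspace_add[OF assms] orthogonal_def algebra_simps inner_add_left)
next
  fix c :: real and a
  show "proj S (c *\<^sub>R a) = c *\<^sub>R proj S a"
    using proj_prop[OF assms, of a]
    by (intro proj_unique[OF assms]) (auto simp: subspace_scale[OF assms] orthogonal_def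
         simp flip: scaleR_diff_right)
qed

lemma proj_id: "subspace (S::(real^3) set) \<Longrightarrow> v \<in> S \<Longrightarrow> proj S v = v"
  by (rule proj_unique) (auto simp: orthogonal_def)

lemma subspace_fsub: "subspace (fsub u v)"
  unfolding fsub_def by (auto intro: subspace_inter subspace_orthogonal_comp)

lemma fsub_sub1: "w \<in> fsub u v \<Longrightarrow> orthogonal u w"
  unfolding fsub_def orthogonal_comp_def by (auto split: if_splits)

lemma fsub_sub2: "orthogonal u v \<Longrightarrow> w \<in> fsub u v \<Longrightarrow> orthogonal v w"
  unfolding fsub_def orthogonal_comp_def by (auto split: if_splits)

lemma proj_zero:
  fixes x y z u :: "real^3"
  assumes n: "norm x = 1" "norm y = 1" "norm z = 1"
    and o: "orthogonal x y" "orthogonal y z" "orthogonal x z" and u: "orthogonal u z"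
  shows "proj (fsub x y) u = 0"
proof (rule proj_unique[OF subspace_fsub])
  show "0 \<in> fsub x y" using subspace_0[OF subspace_fsub] .
  show "\<forall>s\<in>fsub x y. orthogonal (u - 0) s"
  proof
    fix s assume s: "s \<in> fsub x y"
    have sx: "orthogonal x s" and sy: "orthogonal y s"
      using fsub_sub1[OF s] fsub_sub2[OF o(1) s] by auto
    define t where "t = s - (s \<bullet> z) *\<^sub>R z"
    have zz: "z \<bullet> z = 1" using n(3) by (simp add: norm_eq_1)
    have tx: "orthogonal t x" using sx o unfolding t_def orthogonal_def
      by (simp add: inner_diff_left inner_commute[of z x] inner_commute[of s x])
    have ty: "orthogonal t y" using sy o unfolding t_def orthogonal_def
      by (simp add: inner_diff_left inner_commute[of z y] inner_commute[of s y])
    have tz: "orthogonal t z" unfolding t_def orthogonal_def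
      using zz by (simp add: inner_diff_left inner_commute[of s z])
    have nz: "x \<noteq> 0" "y \<noteq> 0" "z \<noteq> 0" using n by auto
    have dxy: "x \<noteq> y" "y \<noteq> z" "x \<noteq> z" using o nz by (auto simp: orthogonal_self)
    have po: "pairwise orthogonal {x, y, z}" using o
      by (auto simp: pairwise_def orthogonal_commute)
    have ind: "independent {x, y, z}"
      using pairwise_orthogonal_independent[OF po] nz by auto
    have c: "card {x, y, z} = dim (UNIV :: (real^3) set)" using dxy by simp
    have "UNIV \<subseteq> span {x, y, z}"
      using card_eq_dim[of "{x,y,z}" UNIV] ind c by simp
    then have "orthogonal t t"
      using tx ty tz by (intro orthogonal_to_span[of t "{x,y,z}"]) auto
    then have "t = 0" by (simp add: orthogonal_self)
    then have "s = (s \<bullet> z) *\<^sub>R z" unfolding t_def by simp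
    then have "u \<bullet> s = (s \<bullet> z) * (u \<bullet> z)"
      by (metis inner_scaleR_right)
    then show "orthogonal (u - 0) s" using u by (simp add: orthogonal_def)
  qed
qed

lemma Pmap_ptensor: "Pmap n x y (ptensor n v) = ptensor n (\<lambda>i. proj (fsub (x ! i) (y ! i)) (v i))"
  unfolding Pmap_def by (rule tensor_map_ptensor) (auto intro: proj_linear subspace_fsub)

lemma Pmap_Esub_form:
  "Pmap n x y (\<lambda>js. \<Sum>k<(m::nat). c k * ptensor n (v k) js)
     = (\<lambda>js. \<Sum>k<m. c k * ptensor n (\<lambda>i. proj (fsub (x ! i) (y ! i)) (v k i)) js)"
  unfolding Pmap_def
  by (subst tensor_map_lin[where f="\<lambda>k. ptensor n (v k)" and K="{..<m}"]) (simp_all add: Pmap_ptensor[unfolded Pmap_def])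

lemma ptensor_zero:
  assumes "i0 < n" "v i0 = 0" shows "ptensor n v = (\<lambda>_. 0)"
proof
  fix js :: "3 list"
  show "ptensor n v js = 0" unfolding ptensor_def
    using assms by (auto intro!: prod_zero bexI[of _ i0])
qed

lemma Pmap_self:
  assumes "t \<in> Esub n x y" shows "Pmap n x y t = t"
proof -
  obtain m :: nat and c v where v: "\<forall>k<m. \<forall>i<n. v k i \<in> fsub (x ! i) (y ! i)"
    and t: "t = (\<lambda>js. \<Sum>k<m. c k * ptensor n (v k) js)"
    using assms unfolding Esub_def tensor_subspace_def by blast
  have "ptensor n (\<lambda>i. proj (fsub (x ! i) (y ! i)) (v k i)) = ptensor n (v k)" if "k < m" for k
    using v that proj_id[OF subspace_fsub] unfolding ptensor_def by (intro ext) (auto intro!: prod.cong)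
  then show ?thesis unfolding t Pmap_Esub_form by (intro ext sum.cong) auto
qed

lemma Pmap_zero:
  assumes "i0 < n" "\<forall>w\<in>fsub (a ! i0) (b ! i0). proj (fsub (x ! i0) (y ! i0)) w = 0"
    and "t \<in> Esub n a b"
  shows "Pmap n x y t = (\<lambda>_. 0)"
proof -
  obtain m :: nat and c v where v: "\<forall>k<m. \<forall>i<n. v k i \<in> fsub (a ! i) (b ! i)"
    and t: "t = (\<lambda>js. \<Sum>k<m. c k * ptensor n (v k) js)"
    using assms unfolding Esub_def tensor_subspace_def by blast
  have "ptensor n (\<lambda>i. proj (fsub (x ! i) (y ! i)) (v k i)) = (\<lambda>_. 0)" if "k < m" for k
    using v that assms(1,2) by (intro ptensor_zero[of i0]) auto
  then show ?thesis unfolding t Pmap_Esub_form by (intro ext sum.neutral) auto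
qed

lemma key:
  assumes code: "vector_trifferent n C"
    and ord: "strict_linear_order_on C r"
    and C: "x \<in> C" "y \<in> C" "a \<in> C" "b \<in> C" and r: "(x, y) \<in> r" "(a, b) \<in> r"
    and ne: "(a, b) \<noteq> (x, y)"
  shows "\<exists>i0<n. \<forall>w\<in>fsub (a ! i0) (b ! i0). proj (fsub (x ! i0) (y ! i0)) w = 0"
proof -
  have irr: "(p, p) \<notin> r" for p using ord unfolding strict_linear_order_on_def irrefl_def by auto
  have asym: "(p, q) \<in> r \<Longrightarrow> (q, p) \<notin> r" for p q
    using ord irr unfolding strict_linear_order_on_def trans_def by blast
  have xy: "x \<noteq> y" "a \<noteq> b" using r irr by auto
  have unit: "\<And>p i. p \<in> C \<Longrightarrow> i < n \<Longrightarrow> norm (p ! i) = 1" using code unfolding vector_trifferent_def by auto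
  have tri: "\<And>p q z. p \<in> C \<Longrightarrow> q \<in> C \<Longrightarrow> z \<in> C \<Longrightarrow> p \<noteq> q \<Longrightarrow> q \<noteq> z \<Longrightarrow> p \<noteq> z \<Longrightarrow>
     \<exists>i<n. orthogonal (p ! i) (q ! i) \<and> orthogonal (q ! i) (z ! i) \<and> orthogonal (p ! i) (z ! i)"
    using code unfolding vector_trifferent_def by blast
  show ?thesis
  proof (cases "a \<in> {x, y}")
    case False
    then obtain i where i: "i < n" "orthogonal (x ! i) (y ! i)" "orthogonal (y ! i) (a ! i)" "orthogonal (x ! i) (a ! i)"
      using tri[of x y a] C xy by auto
    show ?thesis
    proof (intro exI[of _ i] conjI ballI)
      fix w assume w: "w \<in> fsub (a ! i) (b ! i)"
      show "proj (fsub (x ! i) (y ! i)) w = 0"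
        using proj_zero[of "x ! i" "y ! i" "a ! i" w] i unit C fsub_sub1[OF w]
        by (simp add: orthogonal_commute)
    qed (rule i(1))
  next
    case True
    have bn: "b \<notin> {x, y}"
    proof
      assume "b \<in> {x, y}"
      then show False using True xy ne r asym by auto
    qed
    then obtain i where i: "i < n" "orthogonal (x ! i) (y ! i)" "orthogonal (y ! i) (b ! i)" "orthogonal (x ! i) (b ! i)"
      using tri[of x y b] C xy by auto
    have ab: "orthogonal (a ! i) (b ! i)" using True i by auto
    show ?thesis
    proof (intro exI[of _ i] conjI ballI)
      fix w assume w: "w \<in> fsub (a ! i) (b ! i)"
      show "proj (fsub (x ! i) (y ! i)) w = 0"
        using proj_zero[of "x ! i" "y ! i" "b ! i" w] i unit C fsub_sub2[OF ab w]
        by (simp add: orthogonal_commute)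
    qed (rule i(1))
  qed
qed

lemma zero_Esub: "(\<lambda>_. 0) \<in> Esub n a b"
  unfolding Esub_def tensor_subspace_def
  by (rule CollectI, rule exI[of _ 0]) auto

lemma Pmap_sum:
  assumes "finite F"
  shows "Pmap n x y (\<lambda>js. \<Sum>p\<in>F. w p js) = (\<lambda>js. \<Sum>p\<in>F. Pmap n x y (w p) js)"
  using tensor_map_lin[OF assms, of n _ "\<lambda>_. 1" w] unfolding Pmap_def by simp

lemma Pmap_0: "Pmap n x y (\<lambda>_. 0) = (\<lambda>_. 0)"
  unfolding Pmap_def tensor_map_def by auto

theorem mainTheorem6:
  fixes n :: nat and C :: "(real^3) list set"
    and r :: "((real^3) list \<times> (real^3) list) set"
  assumes code: "vector_trifferent n C"
    and ord: "strict_linear_order_on C r"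
  shows "(\<forall>x\<in>C. \<forall>y\<in>C. \<forall>a\<in>C. \<forall>b\<in>C. (x, y) \<in> r \<longrightarrow> (a, b) \<in> r \<longrightarrow>
            Pmap n x y ` Esub n a b = (if (a, b) \<noteq> (x, y) then {\<lambda>_. 0} else Esub n a b))
       \<and> (\<forall>F w. finite F \<longrightarrow> F \<subseteq> r \<inter> (C \<times> C) \<longrightarrow>
            (\<forall>p\<in>F. w p \<in> Esub n (fst p) (snd p)) \<longrightarrow> (\<lambda>js. \<Sum>p\<in>F. w p js) = (\<lambda>_. 0) \<longrightarrow>
            (\<forall>p\<in>F. w p = (\<lambda>_. 0)))"
proof (intro conjI ballI impI allI)
  fix x y a b assume C: "x \<in> C" "y \<in> C" "a \<in> C" "b \<in> C" and r: "(x, y) \<in> r" "(a, b) \<in> r"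
  show "Pmap n x y ` Esub n a b = (if (a, b) \<noteq> (x, y) then {\<lambda>_. 0} else Esub n a b)"
  proof (cases "(a, b) = (x, y)")
    case True
    then show ?thesis using Pmap_self by (auto simp: image_iff)
  next
    case False
    then obtain i0 where "i0 < n" "\<forall>w\<in>fsub (a ! i0) (b ! i0). proj (fsub (x ! i0) (y ! i0)) w = 0"
      using key[OF code ord C r] by blast
    then have "\<And>t. t \<in> Esub n a b \<Longrightarrow> Pmap n x y t = (\<lambda>_. 0)" using Pmap_zero by blast
    then show ?thesis using False zero_Esub[of n a b] by auto
  qed
next
  fix F and w :: "(real^3) list \<times> (real^3) list \<Rightarrow> 3 list \<Rightarrow> real" and q
  assume F: "finite F" "F \<subseteq> r \<inter> (C \<times> C)" and w: "\<forall>p\<in>F. w p \<in> Esub n (fst p) (snd p)"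
    and s: "(\<lambda>js. \<Sum>p\<in>F. w p js) = (\<lambda>_. 0)" and q: "q \<in> F"
  obtain x y where qxy: "q = (x, y)" by (cases q)
  have "(\<lambda>_. 0) = Pmap n x y (\<lambda>js. \<Sum>p\<in>F. w p js)" using s Pmap_0 by simp
  also have "\<dots> = (\<lambda>js. \<Sum>p\<in>F. Pmap n x y (w p) js)" by (rule Pmap_sum[OF F(1)])
  also have "\<dots> = (\<lambda>js. \<Sum>p\<in>F. (if p = q then w q js else 0))"
  proof (intro ext sum.cong refl)
    fix js p assume p: "p \<in> F"
    obtain a b where pab: "p = (a, b)" by (cases p)
    show "Pmap n x y (w p) js = (if p = q then w q js else 0)"
    proof (cases "p = q")
      case True
      then show ?thesis using Pmap_self w p qxy by auto
    next
      case False
      have mem: "x \<in> C" "y \<in> C" "a \<in> C" "b \<in> C" "(x, y) \<in> r" "(a, b) \<in> r"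
        using F(2) p q pab qxy by auto
      obtain i0 where "i0 < n" "\<forall>w\<in>fsub (a ! i0) (b ! i0). proj (fsub (x ! i0) (y ! i0)) w = 0"
        using key[OF code ord mem] False pab qxy by blast
      then have "Pmap n x y (w p) = (\<lambda>_. 0)" using Pmap_zero w p pab by fastforce
      then show ?thesis using False by simp
    qed
  qed
  also have "\<dots> = w q" using F(1) q by (simp add: sum.delta')
  finally show "w q = (\<lambda>_. 0)" by simp
qed

end
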